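(* Let $k,D,s^{\mathrm{in}}>0$, $K_1,\dots,K_5>0$, and let $\mu:[0,\infty)\to[0,\infty)$ satisfy $\mu(0)=0$, $\mu(s)>0$ for $s>0$, $\mu\le\mu_{\max}<\infty$, continuous at $0$. For $x=(b,s)^*\in\mathbb{R}_+^2$ let $$\lambda_1(x)=K_1\mu(s)b,\ \lambda_2(x)=K_2k\mu(s)b,\ \lambda_3(x)=K_3Ds^{\mathrm{in}},\ \lambda_4(x)=K_4Db,\ \lambda_5(x)=K_5Ds,$$ $$\nu_1(x)=\begin{pmatrix}\frac1{K_1}\\0\end{pmatrix},\ \nu_2(x)=-\begin{pmatrix}0\\ \frac{1\wedge K_2 s}{K_2}\end{pmatrix},\ \nu_3(x)=\begin{pmatrix}0\\ \frac1{K_3}\end{pmatrix},\ \nu_4(x)=-\begin{pmatrix}\frac{1\wedge K_4 b}{K_4}\\0\end{pmatrix},\ \nu_5(x)=-\begin{pmatrix}0\\ \frac{1\wedge K_5 s}{K_5}\end{pmatrix}.$$ Let $(X_t)$ be the pure jump Markov process on $\mathbb{R}_+^2$ with infinitesimal generator $\mathcal{A}\phi(x)=\sum_{i=1}^5\lambda_i(x)[\phi(x+\nu_i(x))-\phi(x)]$, with jump times $\tau_0=0$, $\tau_n=\inf\{t>\tau_{n-1}: X_t\ne X_{\tau_{n-1}}\}$. Then $X$ is non-explosive, i.e. $\tau_n\to\infty$ almost surely. Moreover, for every $p\ge1$ such that $\mathbb{E}(|X_0|^p)<\infty$ and every $T>0$ there is a constant $C>0$ such that $\mathbb{E}(|X_t|^p)\le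 C$ for all $t\le T$.
   Context: $a\wedge c=\min(a,c)$ and $|\cdot|$ is the Euclidean norm. From state $x$ the process jumps by $\nu_i(x)$ at rate $\lambda_i(x)$, $i=1,\dots,5$, independently. *)

theory Defs
  imports "HOL-Probability.Probability"
begin

definition chem_rate ::
  "real \<Rightarrow> real \<Rightarrow> real \<Rightarrow> (nat \<Rightarrow> real) \<Rightarrow> (real \<Rightarrow> real) \<Rightarrow> nat \<Rightarrow> real \<times> real \<Rightarrow> real" where
  "chem_rate k D s_in K \<mu> i x =
     (let b = fst x; s = snd x in
      if i = 1 then K 1 * \<mu> s * b
      else if i = 2 then K 2 * k * \<mu> s * b
      else if i = 3 then K 3 * D * s_in
      else if i = 4 then K 4 * D * b
      else if i = 5 then K 5 * D * s
      else 0)"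

definition chem_jump :: "(nat \<Rightarrow> real) \<Rightarrow> nat \<Rightarrow> real \<times> real \<Rightarrow> real \<times> real" where
  "chem_jump K i x =
     (let b = fst x; s = snd x in
      if i = 1 then (1 / K 1, 0)
      else if i = 2 then - (0, min 1 (K 2 * s) / K 2)
      else if i = 3 then (0, 1 / K 3)
      else if i = 4 then - (min 1 (K 4 * b) / K 4, 0)
      else if i = 5 then - (0, min 1 (K 5 * s) / K 5)
      else (0, 0))"

definition chem_total :: "real \<Rightarrow> real \<Rightarrow> real \<Rightarrow> (nat \<Rightarrow> real) \<Rightarrow> (real \<Rightarrow> real) \<Rightarrow> real \<times> real \<Rightarrow> real" where
  "chem_total k D s_in K \<mu> x = (\<Sum>i\<in>{1..5}. chem_rate k D s_in K \<mu> i x)"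

text \<open>Selection of the jump type from a uniform variable u in [0,1]:
  type i is chosen iff the cumulative rates satisfy c_(i-1) <= u*Lambda < c_i,
  i.e. with probability lambda_i / Lambda.\<close>
definition chem_select :: "real \<Rightarrow> real \<Rightarrow> real \<Rightarrow> (nat \<Rightarrow> real) \<Rightarrow> (real \<Rightarrow> real) \<Rightarrow> real \<times> real \<Rightarrow> real \<Rightarrow> nat" where
  "chem_select k D s_in K \<mu> x u =
     (if \<exists>i\<in>{1..5}. u * chem_total k D s_in K \<mu> x < (\<Sum>j\<in>{1..i}. chem_rate k D s_in K \<mu> j x)
      then (LEAST i. i \<in> {1..5} \<and> u * chem_total k D s_in K \<mu> x < (\<Sum>j\<in>{1..i}. chem_rate k D s_in K \<mu> j x))
      else 5)"

primrec chem_chain ::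
  "real \<Rightarrow> real \<Rightarrow> real \<Rightarrow> (nat \<Rightarrow> real) \<Rightarrow> (real \<Rightarrow> real) \<Rightarrow>
   (nat \<Rightarrow> 'a \<Rightarrow> real) \<Rightarrow> ('a \<Rightarrow> real \<times> real) \<Rightarrow> nat \<Rightarrow> 'a \<Rightarrow> real \<times> real" where
  "chem_chain k D s_in K \<mu> U X0 0 \<omega> = X0 \<omega>"
| "chem_chain k D s_in K \<mu> U X0 (Suc n) \<omega> =
     (let x = chem_chain k D s_in K \<mu> U X0 n \<omega>
      in x + chem_jump K (chem_select k D s_in K \<mu> x (U n \<omega>)) x)"

text \<open>Jump times of the construction: holding time in state x is E n / Lambda(x),
  with E n standard exponential.\<close>
primrec chem_T ::
  "real \<Rightarrow> real \<Rightarrow> real \<Rightarrow> (nat \<Rightarrow> real) \<Rightarrow> (real \<Rightarrow> real) \<Rightarrow>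
   (nat \<Rightarrow> 'a \<Rightarrow> real) \<Rightarrow> (nat \<Rightarrow> 'a \<Rightarrow> real) \<Rightarrow> ('a \<Rightarrow> real \<times> real) \<Rightarrow> nat \<Rightarrow> 'a \<Rightarrow> real" where
  "chem_T k D s_in K \<mu> E U X0 0 \<omega> = 0"
| "chem_T k D s_in K \<mu> E U X0 (Suc n) \<omega> =
     chem_T k D s_in K \<mu> E U X0 n \<omega> + E n \<omega> / chem_total k D s_in K \<mu> (chem_chain k D s_in K \<mu> U X0 n \<omega>)"

text \<open>The pure jump process X_t (piecewise constant, right-continuous).  After a possible
  explosion time (sup of the jump times) it is set to (0,0) by convention.\<close>
definition chem_X ::
  "real \<Rightarrow> real \<Rightarrow> real \<Rightarrow> (nat \<Rightarrow> real) \<Rightarrow> (real \<Rightarrow> real) \<Rightarrow>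
   (nat \<Rightarrow> 'a \<Rightarrow> real) \<Rightarrow> (nat \<Rightarrow> 'a \<Rightarrow> real) \<Rightarrow> ('a \<Rightarrow> real \<times> real) \<Rightarrow> real \<Rightarrow> 'a \<Rightarrow> real \<times> real" where
  "chem_X k D s_in K \<mu> E U X0 t \<omega> =
     (if \<exists>n. t < chem_T k D s_in K \<mu> E U X0 (Suc n) \<omega>
      then chem_chain k D s_in K \<mu> U X0 (LEAST n. t < chem_T k D s_in K \<mu> E U X0 (Suc n) \<omega>) \<omega>
      else (0, 0))"

text \<open>Jump times as in the paper: tau_0 = 0,
  tau_n = inf { t > tau_(n-1) : X_t ~= X_(tau_(n-1)) }  (inf of the empty set = infinity).\<close>
primrec jump_time :: "(real \<Rightarrow> 'a \<Rightarrow> 'b) \<Rightarrow> nat \<Rightarrow> 'a \<Rightarrow> ereal" where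
  "jump_time X 0 \<omega> = 0"
| "jump_time X (Suc n) \<omega> =
     Inf {ereal t | t. jump_time X n \<omega> < ereal t \<and> X t \<omega> \<noteq> X (real_of_ereal (jump_time X n \<omega>)) \<omega>}"

end

theory Submission
  imports Defs
begin

lemma five_set: "{1..5::nat} = {1,2,3,4,5}" by auto

lemma jump_bounds:
  assumes K: "\<forall>i\<in>{1..5}. K i > 0" and b: "0 \<le> fst x" and s: "0 \<le> snd x"
  shows "0 \<le> fst (x + chem_jump K i x) \<and> fst (x + chem_jump K i x) \<le> fst x + 1 / K 1
       \<and> 0 \<le> snd (x + chem_jump K i x) \<and> snd (x + chem_jump K i x) \<le> snd x + 1 / K 3"
proof -
  have K1: "K 1 > 0" and K2: "K 2 > 0" and K3: "K 3 > 0" and K4: "K 4 > 0" and K5: "K 5 > 0"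
    using K by auto
  have m2: "min 1 (K 2 * snd x) / K 2 \<le> snd x" "0 \<le> min 1 (K 2 * snd x) / K 2"
    using K2 s by (auto simp: min_def field_simps)
  have m4: "min 1 (K 4 * fst x) / K 4 \<le> fst x" "0 \<le> min 1 (K 4 * fst x) / K 4"
    using K4 b by (auto simp: min_def field_simps)
  have m5: "min 1 (K 5 * snd x) / K 5 \<le> snd x" "0 \<le> min 1 (K 5 * snd x) / K 5"
    using K5 s by (auto simp: min_def field_simps)
  show ?thesis
    using K1 K3 b s m2 m4 m5 by (auto simp: chem_jump_def Let_def intro: order_trans[of _ 0])
qed

lemma chain_bounds:
  assumes K: "\<forall>i\<in>{1..5}. K i > 0" and b: "0 \<le> fst (X0 \<omega>)" and s: "0 \<le> snd (X0 \<omega>)"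
  shows "0 \<le> fst (chem_chain k D s_in K \<mu> U X0 n \<omega>)
       \<and> fst (chem_chain k D s_in K \<mu> U X0 n \<omega>) \<le> fst (X0 \<omega>) + n / K 1
       \<and> 0 \<le> snd (chem_chain k D s_in K \<mu> U X0 n \<omega>)
       \<and> snd (chem_chain k D s_in K \<mu> U X0 n \<omega>) \<le> snd (X0 \<omega>) + n / K 3"
proof (induction n)
  case 0
  then show ?case using b s by simp
next
  case (Suc n)
  let ?x = "chem_chain k D s_in K \<mu> U X0 n \<omega>"
  let ?i = "chem_select k D s_in K \<mu> ?x (U n \<omega>)"
  have J: "0 \<le> fst (?x + chem_jump K ?i ?x) \<and> fst (?x + chem_jump K ?i ?x) \<le> fst ?x + 1 / K 1
       \<and> 0 \<le> snd (?x + chem_jump K ?i ?x) \<and> snd (?x + chem_jump K ?i ?x) \<le> snd ?x + 1 / K 3"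
    using jump_bounds[OF K] Suc by blast
  have "real (Suc n) / K 1 = n / K 1 + 1 / K 1" "real (Suc n) / K 3 = n / K 3 + 1 / K 3"
    by (auto simp: add_divide_distrib)
  then show ?case using J Suc by (simp add: Let_def)
qed

lemma total_bounds:
  assumes K: "\<forall>i\<in>{1..5}. K i > 0" and kD: "k > 0" "D > 0" "s_in > 0"
    and mu0: "\<forall>s\<ge>0. 0 \<le> \<mu> s" and mum: "\<forall>s\<ge>0. \<mu> s \<le> m"
    and b: "0 \<le> fst x" and s: "0 \<le> snd x"
  shows "K 3 * D * s_in \<le> chem_total k D s_in K \<mu> x"
    and "chem_total k D s_in K \<mu> x \<le> (K 1 * m + K 2 * k * m + K 3 * D * s_in + K 4 * D + K 5 * D) * (1 + fst x + snd x)"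
proof -
  have K1: "K 1 > 0" and K2: "K 2 > 0" and K3: "K 3 > 0" and K4: "K 4 > 0" and K5: "K 5 > 0"
    using K by auto
  have mu: "0 \<le> \<mu> (snd x)" "\<mu> (snd x) \<le> m" using mu0 mum s by auto
  have tot: "chem_total k D s_in K \<mu> x = K 1 * \<mu> (snd x) * fst x + K 2 * k * \<mu> (snd x) * fst x
     + K 3 * D * s_in + K 4 * D * fst x + K 5 * D * snd x"
    unfolding chem_total_def five_set by (simp add: chem_rate_def Let_def)
  have p1: "0 \<le> K 1 * \<mu> (snd x) * fst x" "0 \<le> K 2 * k * \<mu> (snd x) * fst x"
    "0 \<le> K 4 * D * fst x" "0 \<le> K 5 * D * snd x"
    using K1 K2 K4 K5 mu b s kD by auto
  show "K 3 * D * s_in \<le> chem_total k D s_in K \<mu> x" using tot p1 by linarith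
  have q1: "K 1 * \<mu> (snd x) * fst x \<le> K 1 * m * fst x"
    using K1 mu b by (simp add: mult_left_mono mult_right_mono)
  have q2: "K 2 * k * \<mu> (snd x) * fst x \<le> K 2 * k * m * fst x"
    using K2 kD mu b by (simp add: mult_left_mono mult_right_mono)
  have m0: "0 \<le> m" using mu by linarith
  have nn: "0 \<le> K 1 * m" "0 \<le> K 2 * k * m" "0 \<le> K 3 * D * s_in" "0 \<le> K 4 * D" "0 \<le> K 5 * D"
    using K1 K2 K3 K4 K5 kD m0 by auto
  show "chem_total k D s_in K \<mu> x \<le> (K 1 * m + K 2 * k * m + K 3 * D * s_in + K 4 * D + K 5 * D) * (1 + fst x + snd x)"
  proof -
    let ?z = "1 + fst x + snd x"
    have z: "fst x \<le> ?z" "snd x \<le> ?z" "1 \<le> ?z" using b s by auto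
    have r1: "K 1 * m * fst x \<le> K 1 * m * ?z" using nn(1) by (rule mult_left_mono[OF z(1)])
    have r2: "K 2 * k * m * fst x \<le> K 2 * k * m * ?z" using nn(2) by (rule mult_left_mono[OF z(1)])
    have r3: "K 3 * D * s_in * 1 \<le> K 3 * D * s_in * ?z" using nn(3) by (rule mult_left_mono[OF z(3)])
    have r4: "K 4 * D * fst x \<le> K 4 * D * ?z" using nn(4) by (rule mult_left_mono[OF z(1)])
    have r5: "K 5 * D * snd x \<le> K 5 * D * ?z" using nn(5) by (rule mult_left_mono[OF z(2)])
    show ?thesis unfolding tot using q1 q2 r1 r2 r3 r4 r5 by (simp add: distrib_right)
  qed
qed

lemma jump_time_ge:
  fixes X :: "real \<Rightarrow> 'a \<Rightarrow> 'b" and T :: "nat \<Rightarrow> real"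
  assumes mono: "mono T" and T0: "T 0 = 0"
    and X: "\<And>t. X t \<omega> = (if \<exists>n. t < T (Suc n) then Y (LEAST n. t < T (Suc n)) else z)"
  shows "ereal (T n) \<le> jump_time X n \<omega>"
proof (induction n)
  case 0
  then show ?case using T0 by simp
next
  case (Suc n)
  let ?tau = "jump_time X n \<omega>"
  show ?case
  proof (cases "?tau = \<infinity>")
    case True
    then show ?thesis by simp
  next
    case False
    have "?tau \<noteq> -\<infinity>" using Suc.IH by auto
    with False obtain r where r: "?tau = ereal r" by (cases ?tau) auto
    have rT: "T n \<le> r" using Suc.IH r by simp
    have "ereal (T (Suc n)) \<le> e" if e: "e \<in> {ereal t | t. ?tau < ereal t \<and> X t \<omega> \<noteq> X (real_of_ereal ?tau) \<omega>}" for e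
    proof -
      obtain t where t: "e = ereal t" "r < t" "X t \<omega> \<noteq> X r \<omega>" using e r by auto
      have "T (Suc n) \<le> t"
      proof (cases "\<exists>m. t < T (Suc m)")
        case False
        then show ?thesis by (simp add: not_less)
      next
        case True
        define m1 where "m1 = (LEAST m. t < T (Suc m))"
        have m1: "t < T (Suc m1)" using True unfolding m1_def by (rule LeastI_ex)
        have ex0: "\<exists>m. r < T (Suc m)" using m1 t(2) by (intro exI[of _ m1]) simp
        define m0 where "m0 = (LEAST m. r < T (Suc m))"
        have m0: "r < T (Suc m0)" using ex0 unfolding m0_def by (rule LeastI_ex)
        have m0m1: "m0 \<le> m1" unfolding m0_def using m1 t(2) by (intro Least_le) simp
        have nm0: "n \<le> m0"
        proof (rule ccontr)
          assume "\<not> n \<le> m0"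
          then have "Suc m0 \<le> n" by simp
          then have "T (Suc m0) \<le> T n" using mono by (simp add: monoD)
          then show False using m0 rT by simp
        qed
        have "m0 \<noteq> m1"
        proof
          assume "m0 = m1"
          then have "X t \<omega> = X r \<omega>" using X[of t] X[of r] True ex0 m0_def m1_def by simp
          then show False using t(3) by simp
        qed
        then have "m0 < m1" using m0m1 by simp
        then have "\<not> t < T (Suc m0)" unfolding m1_def by (rule not_less_Least)
        moreover have "T (Suc n) \<le> T (Suc m0)" using mono nm0 by (simp add: monoD)
        ultimately show ?thesis by simp
      qed
      then show ?thesis using t by simp
    qed
    then have "ereal (T (Suc n)) \<le> Inf {ereal t | t. ?tau < ereal t \<and> X t \<omega> \<noteq> X (real_of_ereal ?tau) \<omega>}"
      by (rule Inf_greatest)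
    then show ?thesis by simp
  qed
qed

lemma exp_laplace:
  assumes "prob_space M"
    and Ed: "distributed M lborel X (\<lambda>x. ennreal (exponential_density 1 x))"
    and th: "0 \<le> \<theta>"
  shows "(\<integral>\<^sup>+\<omega>. ennreal (exp (- \<theta> * X \<omega>)) \<partial>M) = ennreal (1 / (1 + \<theta>))"
proof -
  have "(\<integral>\<^sup>+\<omega>. ennreal (exp (- \<theta> * X \<omega>)) \<partial>M)
      = (\<integral>\<^sup>+x. ennreal (exponential_density 1 x) * ennreal (exp (- \<theta> * x)) \<partial>lborel)"
    by (rule distributed_nn_integral[OF Ed, symmetric]) simp
  also have "\<dots> = (\<integral>\<^sup>+x. ennreal (1 / (1 + \<theta>)) * ennreal (exponential_density (1 + \<theta>) x) \<partial>lborel)"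
  proof (rule nn_integral_cong)
    fix x :: real
    have "exponential_density 1 x * exp (- \<theta> * x) = 1 / (1 + \<theta>) * exponential_density (1 + \<theta>) x"
      using th by (auto simp: exponential_density_def exp_add[symmetric] field_simps)
    then show "ennreal (exponential_density 1 x) * ennreal (exp (- \<theta> * x))
        = ennreal (1 / (1 + \<theta>)) * ennreal (exponential_density (1 + \<theta>) x)"
      using th by (simp add: ennreal_mult'[symmetric] exponential_density_nonneg)
  qed
  also have "\<dots> = ennreal (1 / (1 + \<theta>)) * (\<integral>\<^sup>+x. ennreal (exponential_density (1 + \<theta>) x) \<partial>lborel)"
    by (rule nn_integral_cmult) simp
  also have "(\<integral>\<^sup>+x. ennreal (exponential_density (1 + \<theta>) x) \<partial>lborel) = 1"
  proof -
    have ps: "prob_space (density lborel (\<lambda>x. ennreal (exponential_density (1 + \<theta>) x)))"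
      using th by (intro prob_space_exponential_density) simp
    have "emeasure (density lborel (\<lambda>x. ennreal (exponential_density (1 + \<theta>) x))) UNIV = 1"
      using prob_space.emeasure_space_1[OF ps] by simp
    then show ?thesis by (simp add: emeasure_density)
  qed
  finally show ?thesis by simp
qed

lemma laplace_bound:
  assumes PS: "prob_space M"
    and Ed: "\<forall>n. distributed M lborel (E n) (\<lambda>x. ennreal (exponential_density 1 x))"
    and ind: "prob_space.indep_vars M (\<lambda>_. borel) (case_sum E U) UNIV"
    and J: "finite J" and th: "\<forall>j\<in>J. 0 \<le> \<theta> j"
  shows "emeasure M {\<omega>\<in>space M. (\<Sum>j\<in>J. \<theta> j * E j \<omega>) \<le> u} \<le> ennreal (exp u * (\<Prod>j\<in>J. 1 / (1 + \<theta> j)))"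
proof -
  interpret prob_space M by (rule PS)
  have Em[measurable]: "E j \<in> borel_measurable M" for j
    using distributed_measurable[OF Ed[rule_format, of j]] by simp
  have ind2: "indep_vars (\<lambda>_. borel) (\<lambda>i \<omega>. ennreal (exp (- (case i of Inl j \<Rightarrow> \<theta> j | Inr j \<Rightarrow> 0) * case_sum E U i \<omega>))) (Inl ` J)"
    by (rule indep_vars_compose2[OF indep_vars_subset[OF ind]]) auto
  have mX: "\<And>i. i \<in> Inl ` J \<Longrightarrow> (\<lambda>\<omega>. ennreal (exp (- (case i of Inl j \<Rightarrow> \<theta> j | Inr j \<Rightarrow> 0) * case_sum E U i \<omega>))) \<in> borel_measurable M"
    using ind2 unfolding indep_vars_def by auto
  have "emeasure M {\<omega>\<in>space M. (\<Sum>j\<in>J. \<theta> j * E j \<omega>) \<le> u}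
      = (\<integral>\<^sup>+\<omega>. indicator {\<omega>\<in>space M. (\<Sum>j\<in>J. \<theta> j * E j \<omega>) \<le> u} \<omega> \<partial>M)"
    by (rule nn_integral_indicator[symmetric]) measurable
  also have "\<dots> \<le> (\<integral>\<^sup>+\<omega>. ennreal (exp u) * (\<Prod>i\<in>Inl ` J. ennreal (exp (- (case i of Inl j \<Rightarrow> \<theta> j | Inr j \<Rightarrow> 0) * case_sum E U i \<omega>))) \<partial>M)"
  proof (rule nn_integral_mono)
    fix \<omega>
    have "(\<Prod>i\<in>Inl ` J. ennreal (exp (- (case i of Inl j \<Rightarrow> \<theta> j | Inr j \<Rightarrow> 0) * case_sum E U i \<omega>)))
        = (\<Prod>j\<in>J. ennreal (exp (- \<theta> j * E j \<omega>)))"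
      by (subst prod.reindex) (auto simp: inj_on_def)
    also have "\<dots> = ennreal (\<Prod>j\<in>J. exp (- \<theta> j * E j \<omega>))"
      by (rule prod_ennreal) simp
    also have "(\<Prod>j\<in>J. exp (- \<theta> j * E j \<omega>)) = exp (- (\<Sum>j\<in>J. \<theta> j * E j \<omega>))"
      using J by (simp add: exp_sum[symmetric] sum_negf)
    finally have P: "(\<Prod>i\<in>Inl ` J. ennreal (exp (- (case i of Inl j \<Rightarrow> \<theta> j | Inr j \<Rightarrow> 0) * case_sum E U i \<omega>)))
        = ennreal (exp (- (\<Sum>j\<in>J. \<theta> j * E j \<omega>)))" .
    show "indicator {\<omega>\<in>space M. (\<Sum>j\<in>J. \<theta> j * E j \<omega>) \<le> u} \<omega>
        \<le> ennreal (exp u) * (\<Prod>i\<in>Inl ` J. ennreal (exp (- (case i of Inl j \<Rightarrow> \<theta> j | Inr j \<Rightarrow> 0) * case_sum E U i \<omega>)))"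
    proof (cases "\<omega> \<in> {\<omega>\<in>space M. (\<Sum>j\<in>J. \<theta> j * E j \<omega>) \<le> u}")
      case True
      then have "1 \<le> exp u * exp (- (\<Sum>j\<in>J. \<theta> j * E j \<omega>))"
        by (simp add: exp_add[symmetric])
      then show ?thesis using True unfolding P by (simp add: ennreal_mult'[symmetric])
    qed simp
  qed
  also have "\<dots> = ennreal (exp u) * (\<integral>\<^sup>+\<omega>. (\<Prod>i\<in>Inl ` J. ennreal (exp (- (case i of Inl j \<Rightarrow> \<theta> j | Inr j \<Rightarrow> 0) * case_sum E U i \<omega>))) \<partial>M)"
    by (rule nn_integral_cmult) (rule borel_measurable_prod_ennreal, rule mX)
  also have "(\<integral>\<^sup>+\<omega>. (\<Prod>i\<in>Inl ` J. ennreal (exp (- (case i of Inl j \<Rightarrow> \<theta> j | Inr j \<Rightarrow> 0) * case_sum E U i \<omega>))) \<partial>M)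
      = (\<Prod>i\<in>Inl ` J. \<integral>\<^sup>+\<omega>. ennreal (exp (- (case i of Inl j \<Rightarrow> \<theta> j | Inr j \<Rightarrow> 0) * case_sum E U i \<omega>)) \<partial>M)"
    by (rule indep_vars_nn_integral[OF _ ind2]) (use J in auto)
  also have "\<dots> = (\<Prod>j\<in>J. \<integral>\<^sup>+\<omega>. ennreal (exp (- \<theta> j * E j \<omega>)) \<partial>M)"
    by (subst prod.reindex) (auto simp: inj_on_def)
  also have "\<dots> = (\<Prod>j\<in>J. ennreal (1 / (1 + \<theta> j)))"
    by (rule prod.cong[OF refl], rule exp_laplace[OF PS Ed[rule_format]]) (use th in auto)
  also have "\<dots> = ennreal (\<Prod>j\<in>J. 1 / (1 + \<theta> j))"
    by (rule prod_ennreal) (use th in auto)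
  finally show ?thesis by (simp add: ennreal_mult'[symmetric])
qed

lemma powr_step:
  fixes p :: real and m :: nat
  assumes p: "1 \<le> p"
  shows "real (Suc m) powr p - real m powr p \<le> p * real (Suc m) powr (p - 1)"
proof (cases "m = 0")
  case True
  then show ?thesis using p by simp
next
  case False
  then have m0: "0 < real m" by simp
  have "\<exists>z>real m. z < real (Suc m) \<and> real (Suc m) powr p - real m powr p = (real (Suc m) - real m) * (p * z powr (p - 1))"
    by (rule MVT2) (use m0 in \<open>auto intro!: has_real_derivative_powr\<close>)
  then obtain z where z: "real m < z" "z < real (Suc m)"
    and eq: "real (Suc m) powr p - real m powr p = (real (Suc m) - real m) * (p * z powr (p - 1))" by blast
  have "z powr (p - 1) \<le> real (Suc m) powr (p - 1)"
    using z p m0 by (intro powr_mono2) auto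
  then show ?thesis unfolding eq using p by simp
qed

lemma pow_sum_le:
  fixes p :: real
  assumes p: "1 \<le> p"
  shows "real m powr p \<le> (\<Sum>n\<in>{1..m}. p * real n powr (p - 1))"
proof (induction m)
  case 0
  then show ?case by simp
next
  case (Suc m)
  have "real (Suc m) powr p \<le> real m powr p + p * real (Suc m) powr (p - 1)"
    using powr_step[OF p, of m] by simp
  also have "\<dots> \<le> (\<Sum>n\<in>{1..m}. p * real n powr (p - 1)) + p * real (Suc m) powr (p - 1)"
    using Suc by simp
  also have "\<dots> = (\<Sum>n\<in>{1..Suc m}. p * real n powr (p - 1))"
    by simp
  finally show ?case .
qed

lemma inv_sq_sum:
  fixes L N :: nat
  assumes L: "1 \<le> L"
  shows "(\<Sum>n\<in>{L<..<N}. 1 / real n ^ 2) \<le> 1 / real L"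
proof -
  have "(\<Sum>n\<in>{L<..<L + k}. 1 / real n ^ 2) \<le> 1 / real L - 1 / real (L + k - 1)" if "k \<ge> 1" for k
    using that
  proof (induction k rule: nat_induct_at_least)
    case base
    have "{L<..<L + 1} = {}" by auto
    then show ?case by simp
  next
    case (Suc k)
    have eq: "{L<..<L + Suc k} = insert (L + k) {L<..<L + k}" using Suc.hyps by auto
    have "(\<Sum>n\<in>{L<..<L + Suc k}. 1 / real n ^ 2) = 1 / real (L + k) ^ 2 + (\<Sum>n\<in>{L<..<L + k}. 1 / real n ^ 2)"
      unfolding eq by (subst sum.insert) auto
    also have "\<dots> \<le> 1 / real (L + k) ^ 2 + (1 / real L - 1 / real (L + k - 1))"
      using Suc.IH by simp
    also have "1 / real (L + k) ^ 2 \<le> 1 / real (L + k - 1) - 1 / real (L + k)"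
    proof -
      have a: "real (L + k - 1) = real (L + k) - 1" using L by simp
      have b: "real (L + k) \<ge> 2" using L Suc.hyps by simp
      define x where "x = real (L + k)"
      have x2: "x \<ge> 2" using b x_def by simp
      have e1: "1 / (x - 1) - 1 / x = 1 / (x * (x - 1))" using x2 by (simp add: field_simps)
      have e2: "1 / x ^ 2 \<le> 1 / (x * (x - 1))" using x2
        by (intro divide_left_mono) (auto simp: power2_eq_square intro!: mult_left_mono mult_pos_pos)
      show ?thesis unfolding a x_def[symmetric] using e1 e2 by simp
    qed
    finally show ?case by simp
  qed
  then have A: "(\<Sum>n\<in>{L<..<L + k}. 1 / real n ^ 2) \<le> 1 / real L" if "k \<ge> 1" for k
    using that L by (smt (verit) of_nat_0_le_iff divide_nonneg_nonneg)
  show ?thesis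
  proof (cases "N \<le> L")
    case True
    then show ?thesis by simp
  next
    case False
    then have "N = L + (N - L)" "N - L \<ge> 1" by auto
    then show ?thesis using A[of "N - L"] by simp
  qed
qed

lemma prod_shift_g:
  fixes n r :: nat
  shows "(\<Prod>i<r. real (Suc n) + real i) * real n = (\<Prod>i<r. real n + real i) * (real n + real r)"
proof -
  have "(\<Prod>i<Suc r. real n + real i) = (real n + real 0) * (\<Prod>i<r. real n + real (Suc i))"
    by (rule prod.lessThan_Suc_shift)
  moreover have "(\<Prod>i<Suc r. real n + real i) = (\<Prod>i<r. real n + real i) * (real n + real r)"
    by simp
  moreover have "(\<Prod>i<r. real n + real (Suc i)) = (\<Prod>i<r. real (Suc n) + real i)"
    by (simp add: add_ac)
  ultimately show ?thesis by (simp add: mult_ac)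
qed

lemma prod_eq_g:
  fixes a n r :: nat
  assumes a: "1 \<le> a" and an: "a \<le> n"
  shows "(\<Prod>j\<in>{a..<n}. 1 / (1 + real r / real j)) = (\<Prod>i<r. real a + real i) / (\<Prod>i<r. real n + real i)"
  using an
proof (induction n rule: nat_induct_at_least)
  case base
  have "(\<Prod>i<r. real a + real i) \<noteq> 0" using a by (intro prod_pos[THEN less_imp_neq, symmetric]) auto
  then show ?case by simp
next
  case (Suc n)
  have n1: "real n \<ge> 1" using Suc.hyps a by simp
  have eq: "{a..<Suc n} = insert n {a..<n}" using Suc.hyps by auto
  have gpos: "(\<Prod>i<r. real n + real i) > 0" "(\<Prod>i<r. real (Suc n) + real i) > 0"
    using n1 by (auto intro!: prod_pos)
  have f: "1 / (1 + real r / real n) = real n / (real n + real r)" using n1 by (simp add: field_simps)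
  have "(\<Prod>j\<in>{a..<Suc n}. 1 / (1 + real r / real j)) = real n / (real n + real r) * (\<Prod>j\<in>{a..<n}. 1 / (1 + real r / real j))"
    unfolding eq f[symmetric] by (subst prod.insert) auto
  also have "\<dots> = real n / (real n + real r) * ((\<Prod>i<r. real a + real i) / (\<Prod>i<r. real n + real i))"
    using Suc.IH by simp
  also have "\<dots> = (\<Prod>i<r. real a + real i) / (\<Prod>i<r. real (Suc n) + real i)"
  proof -
    define G where "G = (\<Prod>i<r. real n + real i)"
    define G' where "G' = (\<Prod>i<r. real (Suc n) + real i)"
    define A where "A = (\<Prod>i<r. real a + real i)"
    have h: "G' * real n = G * (real n + real r)" unfolding G_def G'_def by (rule prod_shift_g)
    have Gp: "G > 0" "G' > 0" using gpos G_def G'_def by auto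
    have nr: "real n + real r > 0" using n1 by simp
    have "real n / (real n + real r) = G / G'"
      using h Gp nr by (simp add: divide_eq_eq eq_divide_eq mult.commute)
    then have "real n / (real n + real r) * (A / G) = (G / G') * (A / G)" by simp
    also have "\<dots> = A / G'" using Gp by simp
    finally show ?thesis unfolding A_def G_def G'_def .
  qed
  finally show ?case .
qed

lemma prod_bound1:
  fixes a n r :: nat
  assumes a: "1 \<le> a" and an: "a \<le> n"
  shows "(\<Prod>j\<in>{a..<n}. 1 / (1 + real r / real j)) \<le> ((real a + real r) / real n) ^ r"
proof -
  have n1: "real n \<ge> 1" using a an by simp
  have "(\<Prod>i<r. real a + real i) / (\<Prod>i<r. real n + real i) = (\<Prod>i<r. (real a + real i) / (real n + real i))"
    by (rule prod_dividef[symmetric])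
  also have "\<dots> \<le> (\<Prod>i<r. (real a + real r) / real n)"
  proof (rule prod_mono)
    fix i assume "i \<in> {..<r}"
    then have i: "real i \<le> real r" by simp
    have "(real a + real i) / (real n + real i) \<le> (real a + real i) / real n"
      using n1 by (intro divide_left_mono) auto
    also have "\<dots> \<le> (real a + real r) / real n"
      using n1 i by (intro divide_right_mono) auto
    finally show "0 \<le> (real a + real i) / (real n + real i) \<and> (real a + real i) / (real n + real i) \<le> (real a + real r) / real n"
      using n1 by auto
  qed
  also have "\<dots> = ((real a + real r) / real n) ^ r" by simp
  finally show ?thesis using prod_eq_g[OF a an] by simp
qed

lemma prod_bound:
  fixes a n r :: nat
  assumes an: "a \<le> n" and n1: "1 \<le> n"
  shows "(\<Prod>j\<in>{a..<n}. 1 / (1 + real r / real j)) \<le> ((real a + real r + 1) / real n) ^ r"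
proof (cases "a = 0")
  case True
  have eq: "{0..<n} = insert 0 {1..<n}" using n1 by auto
  have "(\<Prod>j\<in>{a..<n}. 1 / (1 + real r / real j)) = (\<Prod>j\<in>{1..<n}. 1 / (1 + real r / real j))"
    unfolding True eq by (subst prod.insert) auto
  also have "\<dots> \<le> ((1 + real r) / real n) ^ r" using prod_bound1[of 1 n r] n1 by simp
  finally show ?thesis using True by (simp add: add_ac)
next
  case False
  have "(\<Prod>j\<in>{a..<n}. 1 / (1 + real r / real j)) \<le> ((real a + real r) / real n) ^ r"
    using prod_bound1[of a n r] False an by simp
  also have "\<dots> \<le> ((real a + real r + 1) / real n) ^ r"
    using n1 by (intro power_mono divide_right_mono) auto
  finally show ?thesis .
qed

lemma tail_term:
  fixes x y p :: real and r :: nat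
  assumes x: "1 \<le> x" and xy: "x \<le> y" and p: "1 \<le> p" and r: "p + 1 \<le> real r"
  shows "y powr (p - 1) * (x / y) ^ r \<le> x powr (p + 1) / y ^ 2"
proof -
  have y0: "0 < y" using x xy by simp
  have q0: "0 < x / y" using x y0 by simp
  have q1: "x / y \<le> 1" using xy y0 by simp
  have "(x / y) ^ r = (x / y) powr (p + 1) * (x / y) powr (real r - (p + 1))"
    using q0 by (simp add: powr_realpow[symmetric] powr_add[symmetric])
  also have "(x / y) powr (real r - (p + 1)) \<le> 1"
    using powr_mono2[of "real r - (p + 1)" "x / y" 1] q0 q1 r by simp
  then have "(x / y) powr (p + 1) * (x / y) powr (real r - (p + 1)) \<le> (x / y) powr (p + 1)"
    by (intro mult_left_le) auto
  finally have A: "(x / y) ^ r \<le> x powr (p + 1) / y powr (p + 1)"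
    using x y0 by (simp add: powr_divide)
  have B: "y powr (p - 1) / y powr (p + 1) = 1 / y ^ 2"
  proof -
    have "y powr (p - 1) / y powr (p + 1) = y powr ((p - 1) - (p + 1))" by (rule powr_diff[symmetric])
    also have "\<dots> = y powr (- 2)" by simp
    also have "\<dots> = 1 / y ^ 2" using y0 by (simp add: powr_minus powr_numeral divide_inverse)
    finally show ?thesis .
  qed
  have "y powr (p - 1) * (x / y) ^ r \<le> y powr (p - 1) * (x powr (p + 1) / y powr (p + 1))"
    using A by (intro mult_left_mono) auto
  also have "\<dots> = x powr (p + 1) * (y powr (p - 1) / y powr (p + 1))" by simp
  also have "\<dots> = x powr (p + 1) / y ^ 2" unfolding B by simp
  finally show ?thesis .
qed

lemma G_partial:
  fixes p e :: real and a r N :: nat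
  assumes p: "1 \<le> p" and r: "p + 1 \<le> real r" and e: "0 < e"
  shows "(\<Sum>n<N. p * real n powr (p - 1) * min 1 (e * (\<Prod>j\<in>{a..<n}. 1 / (1 + real r / real j))))
         \<le> p * (2 + e) * real (a + r + 1) powr p"
proof -
  define L where "L = a + r + 1"
  have L1: "1 \<le> L" unfolding L_def by simp
  define f where "f n = p * real n powr (p - 1) * min 1 (e * (\<Prod>j\<in>{a..<n}. 1 / (1 + real r / real j)))" for n
  have prodnn: "0 \<le> (\<Prod>j\<in>{a..<n}. 1 / (1 + real r / real j))" for n
    by (intro prod_nonneg) auto
  have fnn: "0 \<le> f n" for n
    unfolding f_def using p e prodnn[of n] by (intro mult_nonneg_nonneg) auto
  have "(\<Sum>n<N. f n) \<le> (\<Sum>n\<in>{..L} \<union> {L<..<N}. f n)"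
    by (intro sum_mono2) (use fnn in auto)
  also have "\<dots> = (\<Sum>n\<in>{..L}. f n) + (\<Sum>n\<in>{L<..<N}. f n)"
    by (rule sum.union_disjoint) auto
  also have "(\<Sum>n\<in>{..L}. f n) \<le> 2 * p * real L powr p"
  proof -
    have "(\<Sum>n\<in>{..L}. f n) \<le> of_nat (card {..L}) * (p * real L powr (p - 1))"
    proof (rule sum_bounded_above)
      fix n assume "n \<in> {..L}"
      then have nL: "real n \<le> real L" by simp
      have "f n \<le> p * real n powr (p - 1) * 1"
        unfolding f_def using p by (intro mult_left_mono) auto
      also have "\<dots> \<le> p * real L powr (p - 1)"
        using p nL by (auto intro!: mult_left_mono powr_mono2)
      finally show "f n \<le> p * real L powr (p - 1)" .
    qed
    also have "\<dots> = (real L + 1) * (p * real L powr (p - 1))" by simp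
    also have "\<dots> \<le> (2 * real L) * (p * real L powr (p - 1))"
      using L1 p by (intro mult_right_mono) auto
    also have "\<dots> = 2 * p * (real L * real L powr (p - 1))" by simp
    also have "real L * real L powr (p - 1) = real L powr p"
    proof -
      have "real L powr p = real L powr (1 + (p - 1))" by simp
      also have "\<dots> = real L powr 1 * real L powr (p - 1)" by (rule powr_add)
      also have "\<dots> = real L * real L powr (p - 1)" using L1 by simp
      finally show ?thesis by simp
    qed
    finally show ?thesis by simp
  qed
  also have "(\<Sum>n\<in>{L<..<N}. f n) \<le> p * e * real L powr p"
  proof -
    have "(\<Sum>n\<in>{L<..<N}. f n) \<le> (\<Sum>n\<in>{L<..<N}. p * e * real L powr (p + 1) * (1 / real n ^ 2))"
    proof (rule sum_mono)
      fix n assume "n \<in> {L<..<N}"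
      then have nL: "L < n" by simp
      have an: "a \<le> n" "1 \<le> n" using nL L_def by auto
      have "min 1 (e * (\<Prod>j\<in>{a..<n}. 1 / (1 + real r / real j))) \<le> e * ((real a + real r + 1) / real n) ^ r"
        using prod_bound[OF an, of r] e by (simp add: min.coboundedI2)
      also have "(real a + real r + 1) = real L" unfolding L_def by simp
      finally have m: "min 1 (e * (\<Prod>j\<in>{a..<n}. 1 / (1 + real r / real j))) \<le> e * (real L / real n) ^ r" .
      have "f n \<le> p * real n powr (p - 1) * (e * (real L / real n) ^ r)"
        unfolding f_def using m p by (intro mult_left_mono) auto
      also have "\<dots> = p * e * (real n powr (p - 1) * (real L / real n) ^ r)" by simp
      also have "\<dots> \<le> p * e * (real L powr (p + 1) / real n ^ 2)"
        using tail_term[of "real L" "real n" p r] L1 nL p r e by (intro mult_left_mono) auto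
      finally show "f n \<le> p * e * real L powr (p + 1) * (1 / real n ^ 2)" by simp
    qed
    also have "\<dots> = p * e * real L powr (p + 1) * (\<Sum>n\<in>{L<..<N}. 1 / real n ^ 2)"
      by (simp add: sum_distrib_left)
    also have "\<dots> \<le> p * e * real L powr (p + 1) * (1 / real L)"
      using inv_sq_sum[OF L1, of N] p e by (intro mult_left_mono) auto
    also have "\<dots> = p * e * real L powr p"
      using L1 by (simp add: powr_add)
    finally show ?thesis .
  qed
  finally show ?thesis unfolding f_def L_def by (simp add: algebra_simps)
qed

lemma T_sum: "chem_T k D s_in K \<mu> E U X0 n \<omega> =
   (\<Sum>j<n. E j \<omega> / chem_total k D s_in K \<mu> (chem_chain k D s_in K \<mu> U X0 j \<omega>))"
  by (induction n) auto

lemma path_facts: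
  assumes K: "\<forall>i\<in>{1..5}. K i > 0" and kD: "k > 0" "D > 0" "s_in > 0"
    and mu0: "\<forall>s\<ge>0. 0 \<le> \<mu> s" and mum: "\<forall>s\<ge>0. \<mu> s \<le> m0"
    and b: "0 \<le> fst (X0 \<omega>)" and s: "0 \<le> snd (X0 \<omega>)" and Enn: "\<forall>j. 0 \<le> E j \<omega>"
    and c2: "c2 = (K 1 * m0 + K 2 * k * m0 + K 3 * D * s_in + K 4 * D + K 5 * D) * max 1 (1 / K 1 + 1 / K 3)"
    and A: "A = 1 + fst (X0 \<omega>) + snd (X0 \<omega>)"
  shows "0 < c2" and "mono (\<lambda>n. chem_T k D s_in K \<mu> E U X0 n \<omega>)"
    and "(\<Sum>j<n. E j \<omega> / (c2 * (A + real j))) \<le> chem_T k D s_in K \<mu> E U X0 n \<omega>"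
proof -
  have K1: "K 1 > 0" and K2: "K 2 > 0" and K3: "K 3 > 0" and K4: "K 4 > 0" and K5: "K 5 > 0"
    using K by auto
  have m0: "0 \<le> m0" using mu0 mum by force
  define c0 where "c0 = K 1 * m0 + K 2 * k * m0 + K 3 * D * s_in + K 4 * D + K 5 * D"
  define dd where "dd = max 1 (1 / K 1 + 1 / K 3)"
  have c0: "0 < c0" unfolding c0_def using K1 K2 K3 K4 K5 kD m0
    by (intro add_nonneg_pos add_pos_nonneg) auto
  have dd: "1 \<le> dd" "1 / K 1 + 1 / K 3 \<le> dd" unfolding dd_def by auto
  show c2p: "0 < c2" unfolding c2 c0_def[symmetric] dd_def[symmetric] using c0 dd by simp
  have c2': "c2 = c0 * dd" using c2 c0_def dd_def by simp
  let ?Y = "\<lambda>j. chem_chain k D s_in K \<mu> U X0 j \<omega>"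
  have bnd: "K 3 * D * s_in \<le> chem_total k D s_in K \<mu> (?Y j) \<and> chem_total k D s_in K \<mu> (?Y j) \<le> c2 * (A + real j)" for j
  proof -
    have cb: "0 \<le> fst (?Y j) \<and> fst (?Y j) \<le> fst (X0 \<omega>) + j / K 1 \<and> 0 \<le> snd (?Y j) \<and> snd (?Y j) \<le> snd (X0 \<omega>) + j / K 3"
      using chain_bounds[of K X0 \<omega>] K b s by blast
    have t1: "K 3 * D * s_in \<le> chem_total k D s_in K \<mu> (?Y j)"
      using total_bounds(1)[OF K kD mu0 mum] cb by blast
    have t2: "chem_total k D s_in K \<mu> (?Y j) \<le> c0 * (1 + fst (?Y j) + snd (?Y j))"
      using total_bounds(2)[OF K kD mu0 mum] cb unfolding c0_def by blast
    have "1 + fst (?Y j) + snd (?Y j) \<le> A + real j * (1 / K 1 + 1 / K 3)"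
      using cb A by (simp add: algebra_simps)
    also have "\<dots> \<le> dd * A + dd * real j"
    proof -
      have "A \<le> dd * A" using dd A b s by (simp add: mult_le_cancel_right1)
      moreover have "real j * (1 / K 1 + 1 / K 3) \<le> dd * real j" using mult_left_mono[OF dd(2), of "real j"] by (simp add: mult.commute)
      ultimately show ?thesis by simp
    qed
    finally have "c0 * (1 + fst (?Y j) + snd (?Y j)) \<le> c0 * (dd * A + dd * real j)"
      using c0 by (intro mult_left_mono) auto
    moreover have "c0 * (dd * A + dd * real j) = c2 * (A + real j)"
      using c2' by (simp add: algebra_simps)
    ultimately show ?thesis using t1 t2 by linarith
  qed
  have pos: "0 < chem_total k D s_in K \<mu> (?Y j)" for j
  proof -
    have "0 < K 3 * D * s_in" using K3 kD by simp
    then show ?thesis using bnd[of j] by linarith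
  qed
  show "mono (\<lambda>n. chem_T k D s_in K \<mu> E U X0 n \<omega>)"
    by (rule incseq_SucI) (use Enn pos in \<open>auto intro: divide_nonneg_pos\<close>)
  show "(\<Sum>j<n. E j \<omega> / (c2 * (A + real j))) \<le> chem_T k D s_in K \<mu> E U X0 n \<omega>"
    unfolding T_sum
  proof (rule sum_mono)
    fix j
    show "E j \<omega> / (c2 * (A + real j)) \<le> E j \<omega> / chem_total k D s_in K \<mu> (?Y j)"
      using Enn bnd[of j] pos[of j] by (intro divide_left_mono) auto
  qed
qed

lemma prod_harm: "(\<Prod>j<n. 1 / (1 + 1 / (real j + 1))) = 1 / (real n + 1)"
proof (induction n)
  case 0
  then show ?case by simp
next
  case (Suc n)
  have "1 / (1 + 1 / (real n + 1)) = (real n + 1) / (real n + 2)" by (simp add: field_simps)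
  then show ?case using Suc by (simp add: field_simps)
qed

lemma E_nonneg_AE:
  fixes E :: "nat \<Rightarrow> 'a \<Rightarrow> real"
  assumes PS: "prob_space M"
    and Ed: "\<forall>n. distributed M lborel (E n) (\<lambda>x. ennreal (exponential_density 1 x))"
  shows "AE \<omega> in M. \<forall>j. 0 \<le> E j \<omega>"
proof -
  interpret prob_space M by (rule PS)
  have "AE \<omega> in M. 0 \<le> E j \<omega>" for j
  proof (rule AE_I'[of "E j -` {..<0} \<inter> space M"])
    have m: "E j \<in> borel_measurable M" using distributed_measurable[OF Ed[rule_format, of j]] by simp
    have s: "E j -` {..<0} \<inter> space M \<in> sets M" using m by measurable
    have "emeasure M (E j -` {..<0} \<inter> space M) = (\<integral>\<^sup>+x. ennreal (exponential_density 1 x) * indicator {..<0} x \<partial>lborel)"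
      by (rule distributed_emeasure[OF Ed[rule_format, of j]]) simp
    also have "\<dots> = (\<integral>\<^sup>+(x::real). 0 \<partial>lborel)"
      by (rule nn_integral_cong) (auto simp: exponential_density_def indicator_def)
    finally show "E j -` {..<0} \<inter> space M \<in> null_sets M" using s by (simp add: null_sets_def)
  qed auto
  then have "\<forall>j. AE \<omega> in M. 0 \<le> E j \<omega>" by blast
  then show ?thesis by (simp add: AE_all_countable)
qed

lemma part1:
  fixes M :: "'a measure"
    and k D s_in :: real
    and K :: "nat \<Rightarrow> real"
    and \<mu> :: "real \<Rightarrow> real"
    and X0 :: "'a \<Rightarrow> real \<times> real"
    and E U :: "nat \<Rightarrow> 'a \<Rightarrow> real"
  assumes "k > 0" and "D > 0" and "s_in > 0"
    and "\<forall>i\<in>{1..5}. K i > 0"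
    and "\<mu> 0 = 0" and "\<forall>s>0. \<mu> s > 0"
    and "\<exists>\<mu>max. \<forall>s\<ge>0. \<mu> s \<le> \<mu>max"
    and "prob_space M"
    and "\<forall>\<omega>\<in>space M. fst (X0 \<omega>) \<ge> 0 \<and> snd (X0 \<omega>) \<ge> 0"
    and "\<forall>n. distributed M lborel (E n) (exponential_density 1)"
    and "prob_space.indep_vars M (\<lambda>_. borel) (case_sum E U) UNIV"
  shows "AE \<omega> in M. (\<lambda>n. jump_time (chem_X k D s_in K \<mu> E U X0) n \<omega>) \<longlonglongrightarrow> \<infinity>"
proof -
  note kD = assms(1,2,3) and K = assms(4) and PS = assms(8) and X0nn = assms(9)
    and Ed = assms(10) and ind = assms(11)
  interpret prob_space M by (rule PS)
  obtain m0 where mum: "\<forall>s\<ge>0. \<mu> s \<le> m0" using assms(7) by blast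
  have mu0: "\<forall>s\<ge>0. 0 \<le> \<mu> s" using assms(5,6) by (metis less_eq_real_def)
  define c2 where "c2 = (K 1 * m0 + K 2 * k * m0 + K 3 * D * s_in + K 4 * D + K 5 * D) * max 1 (1 / K 1 + 1 / K 3)"
  define \<theta> where "\<theta> j = 1 / (real j + 1)" for j :: nat
  have Em[measurable]: "E j \<in> borel_measurable M" for j
    using distributed_measurable[OF Ed[rule_format, of j]] by simp
  have AEnn: "AE \<omega> in M. \<forall>j. 0 \<le> E j \<omega>" by (rule E_nonneg_AE[OF PS Ed])
  have AEdiv: "AE \<omega> in M. \<forall>K0::nat. \<exists>n. real K0 < (\<Sum>j<n. \<theta> j * E j \<omega>)"
  proof (subst AE_all_countable, intro allI)
    fix K0 :: nat
    define N where "N = {\<omega>\<in>space M. \<forall>n. (\<Sum>j<n. \<theta> j * E j \<omega>) \<le> real K0}"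
    have Ns: "N \<in> sets M" unfolding N_def by measurable
    have bnd: "measure M N \<le> exp (real K0) / (real n + 1)" for n
    proof -
      have "emeasure M N \<le> emeasure M {\<omega>\<in>space M. (\<Sum>j\<in>{..<n}. \<theta> j * E j \<omega>) \<le> real K0}"
        by (rule emeasure_mono) (auto simp: N_def)
      also have "\<dots> \<le> ennreal (exp (real K0) * (\<Prod>j\<in>{..<n}. 1 / (1 + \<theta> j)))"
        by (rule laplace_bound[OF PS Ed ind]) (auto simp: \<theta>_def)
      also have "(\<Prod>j\<in>{..<n}. 1 / (1 + \<theta> j)) = 1 / (real n + 1)"
        unfolding \<theta>_def by (rule prod_harm)
      finally show ?thesis by (simp add: emeasure_eq_measure)
    qed
    have "measure M N = 0"
    proof (rule ccontr)
      assume "measure M N \<noteq> 0"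
      then have v: "measure M N > 0" by (simp add: zero_less_measure_iff)
      define n where "n = nat \<lceil>exp (real K0) / measure M N\<rceil>"
      have "exp (real K0) / measure M N \<le> real n" unfolding n_def by linarith
      then have "exp (real K0) \<le> real n * measure M N" using v by (simp add: divide_le_eq)
      then have "exp (real K0) < (real n + 1) * measure M N" using v by (simp add: algebra_simps)
      then have "exp (real K0) / (real n + 1) < measure M N" by (simp add: divide_less_eq mult.commute)
      then show False using bnd[of n] by simp
    qed
    then have "N \<in> null_sets M" using Ns by (simp add: emeasure_eq_measure null_sets_def)
    then show "AE \<omega> in M. \<exists>n. real K0 < (\<Sum>j<n. \<theta> j * E j \<omega>)"
      by (rule AE_I') (auto simp: N_def not_less)
  qed
  have "AE \<omega> in M. \<omega> \<in> space M \<and> (\<forall>j. 0 \<le> E j \<omega>) \<and> (\<forall>K0::nat. \<exists>n. real K0 < (\<Sum>j<n. \<theta> j * E j \<omega>))"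
    using AE_space AEnn AEdiv by eventually_elim auto
  then show ?thesis
  proof (rule eventually_mono)
    fix \<omega> assume H: "\<omega> \<in> space M \<and> (\<forall>j. 0 \<le> E j \<omega>) \<and> (\<forall>K0::nat. \<exists>n. real K0 < (\<Sum>j<n. \<theta> j * E j \<omega>))"
    then have sp: "\<omega> \<in> space M" and Enn: "\<forall>j. 0 \<le> E j \<omega>"
      and div: "\<forall>K0::nat. \<exists>n. real K0 < (\<Sum>j<n. \<theta> j * E j \<omega>)" by auto
    have b: "0 \<le> fst (X0 \<omega>)" and s: "0 \<le> snd (X0 \<omega>)" using X0nn sp by auto
    define A where "A = 1 + fst (X0 \<omega>) + snd (X0 \<omega>)"
    have A1: "1 \<le> A" using b s A_def by simp
    have c2p: "0 < c2" and mono: "mono (\<lambda>n. chem_T k D s_in K \<mu> E U X0 n \<omega>)"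
      and low: "\<And>n. (\<Sum>j<n. E j \<omega> / (c2 * (A + real j))) \<le> chem_T k D s_in K \<mu> E U X0 n \<omega>"
      using path_facts(1)[of K k D s_in \<mu> m0 X0 \<omega> E c2 A, OF K kD mu0 mum b s Enn c2_def A_def]
        path_facts(2)[of K k D s_in \<mu> m0 X0 \<omega> E c2 A U, OF K kD mu0 mum b s Enn c2_def A_def]
        path_facts(3)[of K k D s_in \<mu> m0 X0 \<omega> E c2 A _ U, OF K kD mu0 mum b s Enn c2_def A_def] by auto
    have jt: "ereal (chem_T k D s_in K \<mu> E U X0 n \<omega>) \<le> jump_time (chem_X k D s_in K \<mu> E U X0) n \<omega>" for n
      by (rule jump_time_ge[OF mono]) (auto simp: chem_X_def)
    have R: "(\<Sum>j<n. \<theta> j * E j \<omega>) / (c2 * A) \<le> chem_T k D s_in K \<mu> E U X0 n \<omega>" for n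
    proof -
      have "(\<Sum>j<n. \<theta> j * E j \<omega>) / (c2 * A) = (\<Sum>j<n. E j \<omega> * (1 / ((real j + 1) * (c2 * A))))"
        by (simp add: sum_divide_distrib \<theta>_def)
      also have "\<dots> \<le> (\<Sum>j<n. E j \<omega> * (1 / (c2 * (A + real j))))"
      proof (rule sum_mono)
        fix j assume "j \<in> {..<n}"
        have "real j \<le> A * real j" using A1 mult_right_mono[OF A1, of "real j"] by simp
        then have "c2 * (A + real j) \<le> (real j + 1) * (c2 * A)"
          using c2p A1 by (simp add: algebra_simps)
        then have "1 / ((real j + 1) * (c2 * A)) \<le> 1 / (c2 * (A + real j))"
          using c2p A1 by (intro divide_left_mono) auto
        then show "E j \<omega> * (1 / ((real j + 1) * (c2 * A))) \<le> E j \<omega> * (1 / (c2 * (A + real j)))"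
          using Enn by (intro mult_left_mono) auto
      qed
      also have "\<dots> \<le> chem_T k D s_in K \<mu> E U X0 n \<omega>" using low[of n] by simp
      finally show ?thesis .
    qed
    show "(\<lambda>n. jump_time (chem_X k D s_in K \<mu> E U X0) n \<omega>) \<longlonglongrightarrow> \<infinity>"
      unfolding Lim_PInfty
    proof
      fix B :: real
      define K0 where "K0 = nat \<lceil>B * c2 * A\<rceil>"
      have K0: "B * c2 * A \<le> real K0" unfolding K0_def by linarith
      obtain n0 where n0: "real K0 < (\<Sum>j<n0. \<theta> j * E j \<omega>)" using div by blast
      have "\<forall>n\<ge>n0. ereal B \<le> jump_time (chem_X k D s_in K \<mu> E U X0) n \<omega>"
      proof (intro allI impI)
        fix n assume nn0: "n0 \<le> n"
        have "(\<Sum>j<n0. \<theta> j * E j \<omega>) \<le> (\<Sum>j<n. \<theta> j * E j \<omega>)"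
          using nn0 Enn by (intro sum_mono2) (auto simp: \<theta>_def)
        then have "B * c2 * A \<le> (\<Sum>j<n. \<theta> j * E j \<omega>)" using n0 K0 by linarith
        then have "B \<le> (\<Sum>j<n. \<theta> j * E j \<omega>) / (c2 * A)"
          using c2p A1 by (simp add: le_divide_eq mult.assoc)
        then have "B \<le> chem_T k D s_in K \<mu> E U X0 n \<omega>" using R[of n] by linarith
        then show "ereal B \<le> jump_time (chem_X k D s_in K \<mu> E U X0) n \<omega>"
          using jt[of n] by (meson ereal_less_eq(3) order_trans)
      qed
      then show "\<exists>N. \<forall>n\<ge>N. ereal B \<le> jump_time (chem_X k D s_in K \<mu> E U X0) n \<omega>" by blast
    qed
  qed
qed

lemma powr_add_le:
  fixes x y p :: real
  assumes x: "0 \<le> x" and y: "0 \<le> y" and p: "0 \<le> p"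
  shows "(x + y) powr p \<le> 2 powr p * (x powr p + y powr p)"
proof -
  have "(x + y) powr p \<le> (2 * max x y) powr p"
    using x y p by (intro powr_mono2) auto
  also have "\<dots> = 2 powr p * max x y powr p" using x y by (simp add: powr_mult)
  also have "max x y powr p \<le> x powr p + y powr p"
    by (cases "x \<le> y") (auto simp: max_def)
  then have "2 powr p * max x y powr p \<le> 2 powr p * (x powr p + y powr p)"
    by (intro mult_left_mono) auto
  finally show ?thesis .
qed

lemma ennreal_le_suminf1: "(f::nat \<Rightarrow> ennreal) i \<le> suminf f"
proof -
  have "sum f {i} \<le> suminf f" by (rule sum_le_suminf) auto
  then show ?thesis by simp
qed

lemma ennreal_sum_le_suminf: "finite I \<Longrightarrow> sum (f::nat \<Rightarrow> ennreal) I \<le> suminf f"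
  by (rule sum_le_suminf) auto

lemma part2:
  fixes M :: "'a measure"
    and k D s_in :: real
    and K :: "nat \<Rightarrow> real"
    and \<mu> :: "real \<Rightarrow> real"
    and X0 :: "'a \<Rightarrow> real \<times> real"
    and E U :: "nat \<Rightarrow> 'a \<Rightarrow> real"
  assumes "k > 0" and "D > 0" and "s_in > 0"
    and "\<forall>i\<in>{1..5}. K i > 0"
    and "\<mu> 0 = 0" and "\<forall>s>0. \<mu> s > 0"
    and "\<exists>\<mu>max. \<forall>s\<ge>0. \<mu> s \<le> \<mu>max"
    and "prob_space M"
    and "X0 \<in> borel_measurable M"
    and "\<forall>\<omega>\<in>space M. fst (X0 \<omega>) \<ge> 0 \<and> snd (X0 \<omega>) \<ge> 0"
    and "\<forall>n. distributed M lborel (E n) (exponential_density 1)"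
    and "prob_space.indep_vars M (\<lambda>_. borel) (case_sum E U) UNIV"
    and "prob_space.indep_set M
            {X0 -` S \<inter> space M | S. S \<in> sets (borel :: (real \<times> real) measure)}
            {(\<lambda>\<omega> i. case_sum E U i \<omega>) -` S \<inter> space M | S. S \<in> sets (Pi\<^sub>M UNIV (\<lambda>_. (borel :: real measure)))}"
    and p: "1 \<le> p" and fin: "(\<integral>\<^sup>+\<omega>. ennreal (norm (X0 \<omega>) powr p) \<partial>M) < \<infinity>" and Tm: "0 < Tm"
  shows "\<exists>C>0. \<forall>t\<in>{0..Tm}.
               (\<integral>\<^sup>+\<omega>. ennreal (norm (chem_X k D s_in K \<mu> E U X0 t \<omega>) powr p) \<partial>M) \<le> ennreal C"
proof -
  note kD = assms(1,2,3) and K = assms(4) and PS = assms(8) and X0m[measurable] = assms(9) and X0nn = assms(10)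
    and Ed = assms(11) and ind = assms(12) and indset = assms(13)
  interpret prob_space M by (rule PS)
  have X0m'[measurable]: "X0 \<in> M \<rightarrow>\<^sub>M (borel \<Otimes>\<^sub>M borel :: (real \<times> real) measure)"
    using X0m by (simp add: borel_prod)
  obtain m0 where mum: "\<forall>s\<ge>0. \<mu> s \<le> m0" using assms(7) by blast
  have mu0: "\<forall>s\<ge>0. 0 \<le> \<mu> s" using assms(5,6) by (metis less_eq_real_def)
  have K1: "K 1 > 0" and K2: "K 2 > 0" and K3: "K 3 > 0" and K4: "K 4 > 0" and K5: "K 5 > 0"
    using K by auto
  define c2 where "c2 = (K 1 * m0 + K 2 * k * m0 + K 3 * D * s_in + K 4 * D + K 5 * D) * max 1 (1 / K 1 + 1 / K 3)"
  have c2p: "0 < c2"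
  proof -
    have m0: "0 \<le> m0" using mu0 mum by force
    have "0 < K 1 * m0 + K 2 * k * m0 + K 3 * D * s_in + K 4 * D + K 5 * D"
      using K1 K2 K3 K4 K5 kD m0 by (intro add_nonneg_pos add_pos_nonneg) auto
    then show ?thesis unfolding c2_def by (simp add: mult_pos_pos)
  qed
  have Em[measurable]: "E j \<in> borel_measurable M" for j
    using distributed_measurable[OF Ed[rule_format, of j]] by simp
  have AEnn: "AE \<omega> in M. \<forall>j. 0 \<le> E j \<omega>" by (rule E_nonneg_AE[OF PS Ed])
  define r :: nat where "r = nat \<lceil>p\<rceil> + 1"
  have r: "p + 1 \<le> real r" unfolding r_def using p by linarith
  define u where "u = 2 * c2 * real r * Tm"
  define e where "e = exp u"
  have e: "0 < e" unfolding e_def by simp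
  define d where "d = 1 / K 1 + 1 / K 3"
  have d: "0 < d" unfolding d_def using K1 K3 by (intro add_pos_pos) auto
  define Aset where "Aset a' = {\<omega>\<in>space M. real a' - 1 < 1 + fst (X0 \<omega>) + snd (X0 \<omega>) \<and> 1 + fst (X0 \<omega>) + snd (X0 \<omega>) \<le> real a'}" for a' :: nat
  define Bset where "Bset a' n = {\<omega>\<in>space M. (\<Sum>j\<in>{a'..<n}. (real r / real j) * E j \<omega>) \<le> u}" for a' n :: nat
  have As[measurable]: "Aset a' \<in> sets M" for a' unfolding Aset_def by measurable
  have Bs[measurable]: "Bset a' n \<in> sets M" for a' n unfolding Bset_def by measurable
  define w where "w n = p * real n powr (p - 1)" for n :: nat
  have w: "0 \<le> w n" for n unfolding w_def using p by simp
  define S where "S \<omega> = (\<Sum>a'. \<Sum>n. ennreal (w n) * indicator (Aset a' \<inter> Bset a' n) \<omega>)" for \<omega>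
  define RHS where "RHS \<omega> = ennreal (4 powr p * norm (X0 \<omega>) powr p) + ennreal ((2 * d) powr p) * S \<omega>" for \<omega>
  have Sm[measurable]: "S \<in> borel_measurable M" unfolding S_def by measurable
  have RHSm[measurable]: "RHS \<in> borel_measurable M" unfolding RHS_def by measurable
  have stepA: "AE \<omega> in M. \<forall>t\<in>{0..Tm}. ennreal (norm (chem_X k D s_in K \<mu> E U X0 t \<omega>) powr p) \<le> RHS \<omega>"
    using AE_space AEnn
  proof eventually_elim
    case (elim \<omega>)
    then have sp: "\<omega> \<in> space M" and Enn: "\<forall>j. 0 \<le> E j \<omega>" by auto
    have b: "0 \<le> fst (X0 \<omega>)" and s: "0 \<le> snd (X0 \<omega>)" using X0nn sp by auto
    define A where "A = 1 + fst (X0 \<omega>) + snd (X0 \<omega>)"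
    have A1: "1 \<le> A" using b s A_def by simp
    have mono: "mono (\<lambda>n. chem_T k D s_in K \<mu> E U X0 n \<omega>)"
      and low: "\<And>n. (\<Sum>j<n. E j \<omega> / (c2 * (A + real j))) \<le> chem_T k D s_in K \<mu> E U X0 n \<omega>"
      using path_facts(2)[of K k D s_in \<mu> m0 X0 \<omega> E c2 A U, OF K kD mu0 mum b s Enn c2_def A_def]
        path_facts(3)[of K k D s_in \<mu> m0 X0 \<omega> E c2 A _ U, OF K kD mu0 mum b s Enn c2_def A_def] by auto
    define a where "a = nat \<lceil>A\<rceil>"
    have ceilA: "real a = real_of_int \<lceil>A\<rceil>" unfolding a_def using A1 by simp
    have aA: "A \<le> real a" "real a - 1 < A" unfolding ceilA by linarith+
    have a1: "1 \<le> a" using aA A1 by simp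
    have inA: "\<omega> \<in> Aset a" unfolding Aset_def using sp aA A_def by simp
    define N0 where "N0 = norm (X0 \<omega>)"
    have bN: "fst (X0 \<omega>) \<le> N0" "snd (X0 \<omega>) \<le> N0"
      unfolding N0_def using norm_fst_le[of "fst (X0 \<omega>)" "snd (X0 \<omega>)"] norm_snd_le[of "snd (X0 \<omega>)" "fst (X0 \<omega>)"]
      by auto
    have N0: "0 \<le> N0" unfolding N0_def by simp
    show "\<forall>t\<in>{0..Tm}. ennreal (norm (chem_X k D s_in K \<mu> E U X0 t \<omega>) powr p) \<le> RHS \<omega>"
    proof
      fix t assume t: "t \<in> {0..Tm}"
      show "ennreal (norm (chem_X k D s_in K \<mu> E U X0 t \<omega>) powr p) \<le> RHS \<omega>"
      proof (cases "\<exists>n. t < chem_T k D s_in K \<mu> E U X0 (Suc n) \<omega>")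
        case False
        then have "chem_X k D s_in K \<mu> E U X0 t \<omega> = (0, 0)" by (simp add: chem_X_def)
        then show ?thesis by simp
      next
        case True
        define m where "m = (LEAST n. t < chem_T k D s_in K \<mu> E U X0 (Suc n) \<omega>)"
        have X: "chem_X k D s_in K \<mu> E U X0 t \<omega> = chem_chain k D s_in K \<mu> U X0 m \<omega>"
          using True by (simp add: chem_X_def m_def)
        have Tle: "chem_T k D s_in K \<mu> E U X0 n \<omega> \<le> t" if "n \<in> {1..m}" for n
        proof -
          have n1: "1 \<le> n" "n \<le> m" using that by auto
          obtain n' where n': "n = Suc n'" "n' < m" using n1 by (cases n) auto
          have "\<not> t < chem_T k D s_in K \<mu> E U X0 (Suc n') \<omega>"
            using n'(2) unfolding m_def by (rule not_less_Least)
          then show ?thesis using n'(1) by simp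
        qed
        have inB: "\<omega> \<in> Bset a n" if "n \<in> {1..m}" for n
        proof -
          have "(\<Sum>j\<in>{a..<n}. (real r / real j) * E j \<omega>) \<le> (\<Sum>j\<in>{a..<n}. (2 * c2 * real r) * (E j \<omega> / (c2 * (A + real j))))"
          proof (rule sum_mono)
            fix j assume j: "j \<in> {a..<n}"
            then have ja: "real a \<le> real j" by simp
            have j0: "0 < real j" using ja a1 by simp
            have "c2 * (A + real j) \<le> c2 * (2 * real j)" using aA ja c2p by (intro mult_left_mono) auto
            then have "E j \<omega> / (c2 * (2 * real j)) \<le> E j \<omega> / (c2 * (A + real j))"
              using Enn c2p A1 j0 by (intro divide_left_mono) auto
            then have "(2 * c2 * real r) * (E j \<omega> / (c2 * (2 * real j))) \<le> (2 * c2 * real r) * (E j \<omega> / (c2 * (A + real j)))"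
              using c2p by (intro mult_left_mono) auto
            moreover have "(2 * c2 * real r) * (E j \<omega> / (c2 * (2 * real j))) = (real r / real j) * E j \<omega>"
              using c2p j0 by (simp add: field_simps)
            ultimately show "(real r / real j) * E j \<omega> \<le> (2 * c2 * real r) * (E j \<omega> / (c2 * (A + real j)))" by simp
          qed
          also have "\<dots> = (2 * c2 * real r) * (\<Sum>j\<in>{a..<n}. E j \<omega> / (c2 * (A + real j)))"
            by (simp add: sum_distrib_left)
          also have "(\<Sum>j\<in>{a..<n}. E j \<omega> / (c2 * (A + real j))) \<le> (\<Sum>j<n. E j \<omega> / (c2 * (A + real j)))"
            using Enn c2p A1 by (intro sum_mono2) auto
          also have "\<dots> \<le> Tm"
            using low[of n] Tle[OF that] t by simp
          finally have "(\<Sum>j\<in>{a..<n}. (real r / real j) * E j \<omega>) \<le> u"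
            unfolding u_def using c2p by (simp add: mult_left_mono)
          then show ?thesis unfolding Bset_def using sp by simp
        qed
        let ?Y = "chem_chain k D s_in K \<mu> U X0 m \<omega>"
        have cb: "0 \<le> fst ?Y \<and> fst ?Y \<le> fst (X0 \<omega>) + m / K 1 \<and> 0 \<le> snd ?Y \<and> snd ?Y \<le> snd (X0 \<omega>) + m / K 3"
          using chain_bounds[of K X0 \<omega>] K b s by blast
        have "norm ?Y \<le> norm (fst ?Y) + norm (snd ?Y)"
          using norm_Pair_le[of "fst ?Y" "snd ?Y"] by simp
        also have "\<dots> = fst ?Y + snd ?Y" using cb by simp
        also have "\<dots> \<le> fst (X0 \<omega>) + snd (X0 \<omega>) + real m * d"
          using cb unfolding d_def by (simp add: algebra_simps)
        also have "\<dots> \<le> 2 * N0 + real m * d" using bN by simp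
        finally have nY: "norm ?Y \<le> 2 * N0 + real m * d" .
        have "norm ?Y powr p \<le> (2 * N0 + real m * d) powr p"
          using nY p by (intro powr_mono2) auto
        also have "\<dots> \<le> 2 powr p * ((2 * N0) powr p + (real m * d) powr p)"
          using N0 d p by (intro powr_add_le) auto
        also have "\<dots> = 4 powr p * N0 powr p + (2 * d) powr p * real m powr p"
        proof -
          have "(2 * N0) powr p = 2 powr p * N0 powr p" using N0 by (simp add: powr_mult)
          moreover have "(real m * d) powr p = real m powr p * d powr p" using d by (simp add: powr_mult)
          moreover have "(4::real) powr p = 2 powr p * 2 powr p" using powr_mult[of 2 2 p] by simp
          moreover have "(2 * d) powr p = 2 powr p * d powr p" using d by (simp add: powr_mult)
          ultimately show ?thesis by (simp add: algebra_simps)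
        qed
        also have "\<dots> \<le> 4 powr p * N0 powr p + (2 * d) powr p * (\<Sum>n\<in>{1..m}. w n)"
          using pow_sum_le[OF p, of m] unfolding w_def by (intro add_left_mono mult_left_mono) auto
        finally have R: "norm ?Y powr p \<le> 4 powr p * N0 powr p + (2 * d) powr p * (\<Sum>n\<in>{1..m}. w n)" .
        have "ennreal (norm (chem_X k D s_in K \<mu> E U X0 t \<omega>) powr p)
            \<le> ennreal (4 powr p * N0 powr p + (2 * d) powr p * (\<Sum>n\<in>{1..m}. w n))"
          unfolding X using R by (rule ennreal_leI)
        also have "\<dots> = ennreal (4 powr p * N0 powr p) + ennreal ((2 * d) powr p) * (\<Sum>n\<in>{1..m}. ennreal (w n))"
          using w by (simp add: ennreal_plus ennreal_mult sum_nonneg)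
        also have "(\<Sum>n\<in>{1..m}. ennreal (w n)) \<le> S \<omega>"
        proof -
          have "(\<Sum>n\<in>{1..m}. ennreal (w n)) = (\<Sum>n\<in>{1..m}. ennreal (w n) * indicator (Aset a \<inter> Bset a n) \<omega>)"
            using inA inB by (intro sum.cong) auto
          also have "\<dots> \<le> (\<Sum>n. ennreal (w n) * indicator (Aset a \<inter> Bset a n) \<omega>)"
            by (rule ennreal_sum_le_suminf) simp
          also have "\<dots> \<le> S \<omega>" unfolding S_def
            by (rule ennreal_le_suminf1[of "\<lambda>a'. \<Sum>n. ennreal (w n) * indicator (Aset a' \<inter> Bset a' n) \<omega>" a])
          finally show ?thesis .
        qed
        then have "ennreal (4 powr p * N0 powr p) + ennreal ((2 * d) powr p) * (\<Sum>n\<in>{1..m}. ennreal (w n))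
            \<le> RHS \<omega>" unfolding RHS_def N0_def by (intro add_left_mono mult_left_mono) auto
        finally show ?thesis .
      qed
    qed
  qed
  have stepB: "(\<integral>\<^sup>+\<omega>. RHS \<omega> \<partial>M) < \<infinity>"
  proof -
    define Cg where "Cg = p * (2 + e)"
    have Cg: "0 \<le> Cg" unfolding Cg_def using p e by simp
    define h where "h a' = Cg * real (a' + r + 1) powr p" for a' :: nat
    have h: "0 \<le> h a'" for a' unfolding h_def using Cg by simp
    have PB: "emeasure M (Bset a' n) \<le> ennreal (min 1 (e * (\<Prod>j\<in>{a'..<n}. 1 / (1 + real r / real j))))" for a' n
    proof -
      have L: "emeasure M (Bset a' n) \<le> ennreal (exp u * (\<Prod>j\<in>{a'..<n}. 1 / (1 + real r / real j)))"
        unfolding Bset_def by (rule laplace_bound[OF PS Ed ind]) auto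
      have pp: "0 \<le> e * (\<Prod>j\<in>{a'..<n}. 1 / (1 + real r / real j))"
        using e by (intro mult_nonneg_nonneg prod_nonneg) auto
      have "prob (Bset a' n) \<le> e * (\<Prod>j\<in>{a'..<n}. 1 / (1 + real r / real j))"
        using L pp unfolding e_def by (simp add: emeasure_eq_measure ennreal_le_iff)
      moreover have "prob (Bset a' n) \<le> 1" by simp
      ultimately have "prob (Bset a' n) \<le> min 1 (e * (\<Prod>j\<in>{a'..<n}. 1 / (1 + real r / real j)))" by simp
      then show ?thesis unfolding emeasure_eq_measure by (rule ennreal_leI)
    qed
    have inner: "(\<Sum>n. ennreal (w n) * emeasure M (Bset a' n)) \<le> ennreal (h a')" for a'
    proof (rule suminf_le_const[OF summableI])
      fix N
      have "(\<Sum>n<N. ennreal (w n) * emeasure M (Bset a' n))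
          \<le> (\<Sum>n<N. ennreal (w n * min 1 (e * (\<Prod>j\<in>{a'..<n}. 1 / (1 + real r / real j)))))"
      proof (rule sum_mono)
        fix n
        show "ennreal (w n) * emeasure M (Bset a' n) \<le> ennreal (w n * min 1 (e * (\<Prod>j\<in>{a'..<n}. 1 / (1 + real r / real j))))"
          using PB[of a' n] w[of n] by (simp add: ennreal_mult' mult_left_mono)
      qed
      also have "\<dots> = ennreal (\<Sum>n<N. w n * min 1 (e * (\<Prod>j\<in>{a'..<n}. 1 / (1 + real r / real j))))"
      proof (rule sum_ennreal)
        fix n
        have "0 \<le> (\<Prod>j\<in>{a'..<n}. 1 / (1 + real r / real j))" by (intro prod_nonneg) auto
        then show "0 \<le> w n * min 1 (e * (\<Prod>j\<in>{a'..<n}. 1 / (1 + real r / real j)))"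
          using w[of n] e by simp
      qed
      also have "\<dots> \<le> ennreal (h a')"
        unfolding h_def Cg_def w_def using G_partial[OF p r e, of a' N] by (intro ennreal_leI) (simp add: mult.assoc)
      finally show "(\<Sum>n<N. ennreal (w n) * emeasure M (Bset a' n)) \<le> ennreal (h a')" .
    qed
    have indep: "emeasure M (Aset a' \<inter> Bset a' n) = emeasure M (Aset a') * emeasure M (Bset a' n)" for a' n
    proof -
      have A_in: "Aset a' \<in> {X0 -` S \<inter> space M | S. S \<in> sets (borel :: (real \<times> real) measure)}"
      proof -
        let ?S = "{x::real\<times>real. real a' - 1 < 1 + fst x + snd x \<and> 1 + fst x + snd x \<le> real a'}"
        have "{x\<in>space (borel \<Otimes>\<^sub>M borel). real a' - 1 < 1 + fst x + snd x \<and> 1 + fst x + snd x \<le> (real a'::real)} \<in> sets (borel \<Otimes>\<^sub>M (borel :: real measure))"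
          by measurable
        then have "?S \<in> sets borel" unfolding borel_prod by simp
        moreover have "Aset a' = X0 -` ?S \<inter> space M" unfolding Aset_def by auto
        ultimately show ?thesis by blast
      qed
      have B_in: "Bset a' n \<in> {(\<lambda>\<omega> i. case_sum E U i \<omega>) -` S \<inter> space M | S. S \<in> sets (Pi\<^sub>M UNIV (\<lambda>_. (borel :: real measure)))}"
      proof -
        let ?S = "{f::nat+nat\<Rightarrow>real. (\<Sum>j\<in>{a'..<n}. (real r / real j) * f (Inl j)) \<le> u}"
        have "{f\<in>space (Pi\<^sub>M UNIV (\<lambda>_. borel)). (\<Sum>j\<in>{a'..<n}. (real r / real j) * f (Inl j)) \<le> u} \<in> sets (Pi\<^sub>M UNIV (\<lambda>_. (borel::real measure)))"
          by measurable
        then have "?S \<in> sets (Pi\<^sub>M UNIV (\<lambda>_. (borel::real measure)))" by (simp add: space_PiM)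
        moreover have "Bset a' n = (\<lambda>\<omega> i. case_sum E U i \<omega>) -` ?S \<inter> space M" unfolding Bset_def by auto
        ultimately show ?thesis by blast
      qed
      have "prob (Aset a' \<inter> Bset a' n) = prob (Aset a') * prob (Bset a' n)"
        by (rule indep_setD[OF indset A_in B_in])
      then show ?thesis by (simp add: emeasure_eq_measure ennreal_mult')
    qed
    have S_int: "(\<integral>\<^sup>+\<omega>. S \<omega> \<partial>M) = (\<Sum>a'. \<Sum>n. ennreal (w n) * emeasure M (Aset a' \<inter> Bset a' n))"
      unfolding S_def
      by (subst nn_integral_suminf, measurable, subst nn_integral_suminf, measurable)
         (simp add: nn_integral_cmult_indicator)
    also have "\<dots> \<le> (\<Sum>a'. emeasure M (Aset a') * ennreal (h a'))"
    proof (rule suminf_le[OF _ summableI summableI])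
      fix a'
      have "(\<Sum>n. ennreal (w n) * emeasure M (Aset a' \<inter> Bset a' n)) = emeasure M (Aset a') * (\<Sum>n. ennreal (w n) * emeasure M (Bset a' n))"
        unfolding indep by (simp add: ennreal_suminf_cmult[symmetric] mult_ac)
      also have "\<dots> \<le> emeasure M (Aset a') * ennreal (h a')"
        using inner[of a'] by (intro mult_left_mono) auto
      finally show "(\<Sum>n. ennreal (w n) * emeasure M (Aset a' \<inter> Bset a' n)) \<le> emeasure M (Aset a') * ennreal (h a')" .
    qed
    also have "\<dots> = (\<integral>\<^sup>+\<omega>. (\<Sum>a'. ennreal (h a') * indicator (Aset a') \<omega>) \<partial>M)"
      by (subst nn_integral_suminf, measurable) (simp add: nn_integral_cmult_indicator mult_ac)
    also have "\<dots> \<le> (\<integral>\<^sup>+\<omega>. ennreal (Cg * 2 powr p * (real r + 3) powr p) + ennreal (Cg * 2 powr p * 2 powr p) * ennreal (norm (X0 \<omega>) powr p) \<partial>M)"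
    proof (rule nn_integral_mono)
      fix \<omega> assume sp: "\<omega> \<in> space M"
      have b: "0 \<le> fst (X0 \<omega>)" and s: "0 \<le> snd (X0 \<omega>)" using X0nn sp by auto
      define A where "A = 1 + fst (X0 \<omega>) + snd (X0 \<omega>)"
      have A1: "1 \<le> A" using b s A_def by simp
      define a where "a = nat \<lceil>A\<rceil>"
      have ceilA: "real a = real_of_int \<lceil>A\<rceil>" unfolding a_def using A1 by simp
      have aA: "real a < A + 1" unfolding ceilA by linarith
      have iff: "\<omega> \<in> Aset a' \<longleftrightarrow> a' = a" for a'
      proof -
        have "\<omega> \<in> Aset a' \<longleftrightarrow> real a' - 1 < A \<and> A \<le> real a'" unfolding Aset_def A_def using sp by simp
        also have "\<dots> \<longleftrightarrow> \<lceil>A\<rceil> = int a'" by (simp add: ceiling_eq_iff)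
        also have "\<dots> \<longleftrightarrow> a' = a" unfolding a_def using A1 by auto
        finally show ?thesis .
      qed
      have "(\<lambda>a'. ennreal (h a') * indicator (Aset a') \<omega>) = (\<lambda>a'. if a' = a then ennreal (h a') else 0)"
        using iff by (auto simp: indicator_def fun_eq_iff)
      then have "(\<Sum>a'. ennreal (h a') * indicator (Aset a') \<omega>) = ennreal (h a)"
        using sums_unique[OF sums_single[of a "\<lambda>a'. ennreal (h a')"]] by simp
      also have "\<dots> \<le> ennreal (Cg * 2 powr p * (real r + 3) powr p + Cg * 2 powr p * 2 powr p * norm (X0 \<omega>) powr p)"
      proof (rule ennreal_leI)
        define N0 where "N0 = norm (X0 \<omega>)"
        have bN: "fst (X0 \<omega>) \<le> N0" "snd (X0 \<omega>) \<le> N0"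
          unfolding N0_def using norm_fst_le[of "fst (X0 \<omega>)" "snd (X0 \<omega>)"] norm_snd_le[of "snd (X0 \<omega>)" "fst (X0 \<omega>)"]
          by auto
        have N0: "0 \<le> N0" unfolding N0_def by simp
        have "real (a + r + 1) \<le> (real r + 3) + 2 * N0" using aA bN A_def by simp
        then have "real (a + r + 1) powr p \<le> ((real r + 3) + 2 * N0) powr p"
          using p by (intro powr_mono2) auto
        also have "\<dots> \<le> 2 powr p * ((real r + 3) powr p + (2 * N0) powr p)"
          using N0 p by (intro powr_add_le) auto
        also have "(2 * N0) powr p = 2 powr p * N0 powr p" using N0 by (simp add: powr_mult)
        finally have "real (a + r + 1) powr p \<le> 2 powr p * ((real r + 3) powr p + 2 powr p * N0 powr p)" .
        then have "Cg * real (a + r + 1) powr p \<le> Cg * (2 powr p * ((real r + 3) powr p + 2 powr p * N0 powr p))"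
          using Cg by (intro mult_left_mono) auto
        then show "h a \<le> Cg * 2 powr p * (real r + 3) powr p + Cg * 2 powr p * 2 powr p * norm (X0 \<omega>) powr p"
          unfolding h_def N0_def by (simp add: algebra_simps)
      qed
      also have "\<dots> = ennreal (Cg * 2 powr p * (real r + 3) powr p) + ennreal (Cg * 2 powr p * 2 powr p) * ennreal (norm (X0 \<omega>) powr p)"
        using Cg by (simp add: ennreal_plus ennreal_mult')
      finally show "(\<Sum>a'. ennreal (h a') * indicator (Aset a') \<omega>) \<le> ennreal (Cg * 2 powr p * (real r + 3) powr p) + ennreal (Cg * 2 powr p * 2 powr p) * ennreal (norm (X0 \<omega>) powr p)" .
    qed
    also have "\<dots> = ennreal (Cg * 2 powr p * (real r + 3) powr p) + ennreal (Cg * 2 powr p * 2 powr p) * (\<integral>\<^sup>+\<omega>. ennreal (norm (X0 \<omega>) powr p) \<partial>M)"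
      by (subst nn_integral_add, measurable, subst nn_integral_cmult, measurable) (simp add: emeasure_space_1)
    also have "\<dots> < \<infinity>" using fin by (simp add: ennreal_mult_less_top)
    finally have Sfin: "(\<integral>\<^sup>+\<omega>. S \<omega> \<partial>M) < \<infinity>" .
    have "(\<integral>\<^sup>+\<omega>. RHS \<omega> \<partial>M) = ennreal (4 powr p) * (\<integral>\<^sup>+\<omega>. ennreal (norm (X0 \<omega>) powr p) \<partial>M) + ennreal ((2 * d) powr p) * (\<integral>\<^sup>+\<omega>. S \<omega> \<partial>M)"
      unfolding RHS_def
      by (subst nn_integral_add, measurable, subst nn_integral_cmult, measurable)
         (simp add: ennreal_mult' nn_integral_cmult)
    also have "\<dots> < \<infinity>" using fin Sfin by (simp add: ennreal_mult_less_top)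
    finally show ?thesis .
  qed
  define C where "C = enn2real (\<integral>\<^sup>+\<omega>. RHS \<omega> \<partial>M) + 1"
  have Cp: "0 < C" unfolding C_def using enn2real_nonneg[of "integral\<^sup>N M RHS"] by linarith
  have "(\<integral>\<^sup>+\<omega>. RHS \<omega> \<partial>M) \<le> ennreal C"
  proof -
    have "(\<integral>\<^sup>+\<omega>. RHS \<omega> \<partial>M) = ennreal (enn2real (\<integral>\<^sup>+\<omega>. RHS \<omega> \<partial>M))"
      using stepB by (simp add: ennreal_enn2real less_top)
    also have "\<dots> \<le> ennreal C" unfolding C_def by simp
    finally show ?thesis .
  qed
  moreover have "(\<integral>\<^sup>+\<omega>. ennreal (norm (chem_X k D s_in K \<mu> E U X0 t \<omega>) powr p) \<partial>M) \<le> (\<integral>\<^sup>+\<omega>. RHS \<omega> \<partial>M)"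
    if "t \<in> {0..Tm}" for t
    using stepA that by (intro nn_integral_mono_AE) auto
  ultimately show ?thesis using Cp by (meson order_trans)
qed

theorem mainTheorem3:
  fixes M :: "'a measure"
    and k D s_in :: real
    and K :: "nat \<Rightarrow> real"
    and \<mu> :: "real \<Rightarrow> real"
    and X0 :: "'a \<Rightarrow> real \<times> real"
    and E U :: "nat \<Rightarrow> 'a \<Rightarrow> real"
  assumes "k > 0" and "D > 0" and "s_in > 0"
    and "\<forall>i\<in>{1..5}. K i > 0"
    and "\<mu> 0 = 0" and "\<forall>s>0. \<mu> s > 0"
    and "\<exists>\<mu>max. \<forall>s\<ge>0. \<mu> s \<le> \<mu>max"
    and "continuous (at 0 within {0..}) \<mu>"
    and "\<mu> \<in> borel_measurable borel"
    and "prob_space M"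
    and "X0 \<in> borel_measurable M"
    and "\<forall>\<omega>\<in>space M. fst (X0 \<omega>) \<ge> 0 \<and> snd (X0 \<omega>) \<ge> 0"
    and "\<forall>n. distributed M lborel (E n) (exponential_density 1)"
    and "\<forall>n. U n \<in> borel_measurable M \<and> distr M lborel (U n) = uniform_measure lborel {0..1}"
    and "prob_space.indep_vars M (\<lambda>_. borel) (case_sum E U) UNIV"
    and "prob_space.indep_set M
            {X0 -` S \<inter> space M | S. S \<in> sets (borel :: (real \<times> real) measure)}
            {(\<lambda>\<omega> i. case_sum E U i \<omega>) -` S \<inter> space M | S. S \<in> sets (Pi\<^sub>M UNIV (\<lambda>_. (borel :: real measure)))}"
  shows "(AE \<omega> in M. (\<lambda>n. jump_time (chem_X k D s_in K \<mu> E U X0) n \<omega>) \<longlonglongrightarrow> \<infinity>)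
       \<and> (\<forall>p\<ge>1. (\<integral>\<^sup>+\<omega>. ennreal (norm (X0 \<omega>) powr p) \<partial>M) < \<infinity> \<longrightarrow>
            (\<forall>T>0. \<exists>C>0. \<forall>t\<in>{0..T}.
               (\<integral>\<^sup>+\<omega>. ennreal (norm (chem_X k D s_in K \<mu> E U X0 t \<omega>) powr p) \<partial>M) \<le> ennreal C))"
  proof -
  have P1: "AE \<omega> in M. (\<lambda>n. jump_time (chem_X k D s_in K \<mu> E U X0) n \<omega>) \<longlonglongrightarrow> \<infinity>"
    by (rule part1[OF assms(1,2,3,4,5,6,7,10,12,13,15)])
  have P2: "\<forall>p\<ge>1. (\<integral>\<^sup>+\<omega>. ennreal (norm (X0 \<omega>) powr p) \<partial>M) < \<infinity> \<longrightarrow>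
            (\<forall>T>0. \<exists>C>0. \<forall>t\<in>{0..T}.
               (\<integral>\<^sup>+\<omega>. ennreal (norm (chem_X k D s_in K \<mu> E U X0 t \<omega>) powr p) \<partial>M) \<le> ennreal C)"
    using part2[OF assms(1,2,3,4,5,6,7,10,11,12,13,15,16)] by blast
  show ?thesis using P1 P2 by blast
qed

end
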